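(* Consider a sequence $\sigma$ of restricted operations applied to a dynamic set $S$ with function $f:S\to\mathbb{Z}_{\ge0}$, starting from $S=\emptyset$, while a set $H\subseteq S$ and a set $P\subseteq H$ are maintained by the rules described in the context. Let $h_t$ denote the $h$-index of $S$ and $f$ after the first $t$ operations, and let $q=\sum_{t:\,h_t\ge1} 1/h_t$. Then the total number of times an element is added to $P$ or removed from $P$ during $\sigma$ is $O(q)$ (with an absolute constant in the $O$).
   Context: The $h$-index of $S$ and $f$ is the largest $h\ge0$ such that some $h$-element subset of $S$ has all $f$-values at least $h$. Restricted operations: insert a new element $x$ with $f(x)=0$; delete an element $x$ with $f(x)=0$; increment $f(x)$ by $1$; decrement $f(x)$ by $1$ (when $f(x)\ge1$). Initially $H=P=\emptyset$. Maintenance of $H$ (with $h=|H|$ before the operation): insertions and deletions of elements with $f=0$ leave $H$ unchanged. On an increment of $f(x)$: if $x\in H$ or the new value $f(x)\le h$, $H$ is unchanged; otherwise ($x\notin H$ and new $f(x)=h+1$), if some $y\in H$ has $f(y)=h$ then one such $y$ (chosen arbitrarily) is removed from $H$ and $x$ is added, and if no such $y$ exists then $x$ is added to $H$ (so $|H|$ becomes $h+1$). On a decrement of $f(x)$: if $x\notin H$ or the new value $f(x)\ge h$, $H$ is unchanged; otherwise ($x\in H$, new $f(x)=h-1$), $x$ is removed from $H$, and if some $z\notin H$ has $f(z)=h$ then one such $z$ (chosen arbitrarily) is added to $H$, otherwise $|H|$ becomes $h-1$. (These rules keep $|H|$ equal to the $h$-index, $f(x)\ge|H|$ for all $x\in H$,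 and every $x$ with $f(x)>|H|$ in $H$.) Maintenance of $P$: whenever an element is removed from $H$ it is also removed from $P$ (if present); after each operation, every $x\in H\setminus P$ with $f(x)\ge 2|H|$ is added to $P$; no other changes are made to $P$. *)

theory Defs
  imports Complex_Main
begin

datatype 'a oper = Ins 'a | Del 'a | Inc 'a | Dec 'a

text \<open>State: the dynamic set S, the function f (with f x = 0 outside S), and the
  maintained sets H and P.\<close>
record 'a hstate =
  S :: "'a set"
  f :: "'a \<Rightarrow> nat"
  H :: "'a set"
  P :: "'a set"

definition init_state :: "'a hstate" where
  "init_state = \<lparr>S = {}, f = (\<lambda>_. 0), H = {}, P = {}\<rparr>"

definition hindex :: "'a set \<Rightarrow> ('a \<Rightarrow> nat) \<Rightarrow> nat" where
  "hindex A g = (GREATEST h. \<exists>T \<subseteq> A. card T = h \<and> (\<forall>x\<in>T. h \<le> g x))"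

text \<open>Update of H on an increment of f(x); g is the function after the increment.
  The arbitrary choice of y is modelled nondeterministically.\<close>
definition H_inc :: "('a \<Rightarrow> nat) \<Rightarrow> 'a set \<Rightarrow> 'a \<Rightarrow> 'a set \<Rightarrow> bool" where
  "H_inc g Hs x Hs' \<longleftrightarrow>
     (if x \<in> Hs \<or> g x \<le> card Hs then Hs' = Hs
      else if (\<exists>y\<in>Hs. g y = card Hs)
           then (\<exists>y\<in>Hs. g y = card Hs \<and> Hs' = insert x (Hs - {y}))
           else Hs' = insert x Hs)"

definition H_dec :: "('a \<Rightarrow> nat) \<Rightarrow> 'a set \<Rightarrow> 'a set \<Rightarrow> 'a \<Rightarrow> 'a set \<Rightarrow> bool" where
  "H_dec g A Hs x Hs' \<longleftrightarrow>
     (if x \<notin> Hs \<or> card Hs \<le> g x then Hs' = Hs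
      else if (\<exists>z\<in>A - Hs. g z = card Hs)
           then (\<exists>z\<in>A - Hs. g z = card Hs \<and> Hs' = insert z (Hs - {x}))
           else Hs' = Hs - {x})"

definition P_upd :: "('a \<Rightarrow> nat) \<Rightarrow> 'a set \<Rightarrow> 'a set \<Rightarrow> 'a set" where
  "P_upd g Hs' Ps = (Ps \<inter> Hs') \<union> {x \<in> Hs' - (Ps \<inter> Hs'). 2 * card Hs' \<le> g x}"

definition step :: "'a hstate \<Rightarrow> 'a oper \<Rightarrow> 'a hstate \<Rightarrow> bool" where
  "step st op st' \<longleftrightarrow>
     (case op of
        Ins x \<Rightarrow> x \<notin> S st \<and> S st' = insert x (S st) \<and> f st' = (f st)(x := 0)
                 \<and> H st' = H st
      | Del x \<Rightarrow> x \<in> S st \<and> f st x = 0 \<and> S st' = S st - {x} \<and> f st' = f st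
                 \<and> H st' = H st
      | Inc x \<Rightarrow> x \<in> S st \<and> S st' = S st \<and> f st' = (f st)(x := f st x + 1)
                 \<and> H_inc (f st') (H st) x (H st')
      | Dec x \<Rightarrow> x \<in> S st \<and> 1 \<le> f st x \<and> S st' = S st \<and> f st' = (f st)(x := f st x - 1)
                 \<and> H_dec (f st') (S st) (H st) x (H st'))
     \<and> P st' = P_upd (f st') (H st') (P st)"

text \<open>A run: ops is the operation sequence, sts the list of states
  (sts ! t is the state after the first t operations).\<close>
definition run :: "'a oper list \<Rightarrow> 'a hstate list \<Rightarrow> bool" where
  "run ops sts \<longleftrightarrow> length sts = Suc (length ops) \<and> sts ! 0 = init_state \<and>
     (\<forall>t < length ops. step (sts ! t) (ops ! t) (sts ! Suc t))"

definition P_changes :: "'a hstate list \<Rightarrow> nat" where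
  "P_changes sts = (\<Sum>t < length sts - 1.
      card (P (sts ! Suc t) - P (sts ! t)) + card (P (sts ! t) - P (sts ! Suc t)))"

definition qsum :: "'a hstate list \<Rightarrow> real" where
  "qsum sts = (\<Sum>t \<in> {t. 1 \<le> t \<and> t < length sts \<and> 1 \<le> hindex (S (sts ! t)) (f (sts ! t))}.
      1 / real (hindex (S (sts ! t)) (f (sts ! t))))"

end

theory Submission
  imports Defs
begin


definition hinv :: "'a hstate \<Rightarrow> bool" where
  "hinv st \<longleftrightarrow> finite (S st) \<and> H st \<subseteq> S st \<and> P st \<subseteq> H st
     \<and> (\<forall>x. x \<notin> S st \<longrightarrow> f st x = 0)
     \<and> (\<forall>x\<in>H st. card (H st) \<le> f st x)
     \<and> (\<forall>x\<in>S st. card (H st) < f st x \<longrightarrow> x \<in> H st)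
     \<and> (\<forall>x\<in>H st - P st. f st x < 2 * card (H st))"

lemma inv_init: "hinv init_state"
  by (simp add: hinv_def init_state_def)

lemma P_upd_sub: "P_upd g Hs Ps \<subseteq> Hs"
  by (auto simp: P_upd_def)

lemma P_upd_low: "x \<in> Hs - P_upd g Hs Ps \<Longrightarrow> g x < 2 * card Hs"
  by (auto simp: P_upd_def)

definition invH :: "'a set \<Rightarrow> ('a \<Rightarrow> nat) \<Rightarrow> 'a set \<Rightarrow> bool" where
  "invH A g Hs \<longleftrightarrow> finite A \<and> Hs \<subseteq> A \<and> (\<forall>x\<in>Hs. card Hs \<le> g x)
     \<and> (\<forall>x\<in>A. card Hs < g x \<longrightarrow> x \<in> Hs)"

lemma inv_iff: "hinv st \<longleftrightarrow> invH (S st) (f st) (H st) \<and> P st \<subseteq> H st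
   \<and> (\<forall>x. x \<notin> S st \<longrightarrow> f st x = 0)
   \<and> (\<forall>x\<in>H st - P st. f st x < 2 * card (H st))"
  by (auto simp: hinv_def invH_def)

lemma inc_facts:
  assumes I: "invH A g Hs" and x: "x \<in> A" and hi: "H_inc (g(x := g x + 1)) Hs x Hs'"
  shows "invH A (g(x := g x + 1)) Hs' \<and> card Hs' \<le> card Hs + 1 \<and> card Hs \<le> card Hs' + 1
     \<and> (\<forall>y\<in>Hs' - Hs. (g(x := g x + 1)) y \<le> card Hs' + 1)"
proof -
  let ?g = "g(x := g x + 1)"
  let ?h = "card Hs"
  have fin: "finite Hs" using I by (auto simp: invH_def intro: finite_subset)
  show ?thesis
  proof (cases "x \<in> Hs \<or> ?g x \<le> ?h")
    case True
    then have "Hs' = Hs" using hi by (simp add: H_inc_def)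
    then show ?thesis using I True by (auto simp: invH_def)
  next
    case False
    then have xn: "x \<notin> Hs" and gx: "g x + 1 > ?h" by auto
    have "g x \<le> ?h" using I x xn by (auto simp: invH_def)
    then have gx1: "g x = ?h" using gx by auto
    show ?thesis
    proof (cases "\<exists>y\<in>Hs. ?g y = ?h")
      case True
      then obtain y where y: "y \<in> Hs" "?g y = ?h" and Hs': "Hs' = insert x (Hs - {y})"
        using hi False by (auto simp: H_inc_def)
      have yx: "y \<noteq> x" using y xn by auto
      have "x \<notin> Hs - {y}" using xn by simp
      then have "card Hs' = Suc (card (Hs - {y}))" using Hs' fin by simp
      also have "\<dots> = ?h" using fin y(1) by (rule card_Suc_Diff1)
      finally have c: "card Hs' = ?h" .
      show ?thesis using I c Hs' x gx1 y yx xn by (auto simp: invH_def)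
    next
      case False2: False
      then have Hs': "Hs' = insert x Hs" using hi False by (auto simp: H_inc_def)
      have c: "card Hs' = ?h + 1" using Hs' fin xn by simp
      have "\<forall>z\<in>Hs. ?g z \<ge> ?h + 1"
      proof
        fix z assume z: "z \<in> Hs"
        then have "?g z \<ge> ?h" using I xn by (auto simp: invH_def)
        moreover have "?g z \<noteq> ?h" using False2 z by blast
        ultimately show "?g z \<ge> ?h + 1" by simp
      qed
      then show ?thesis using I c Hs' x gx1 xn by (auto simp: invH_def)
    qed
  qed
qed

lemma dec_facts:
  assumes I: "invH A g Hs" and x: "x \<in> A" and g1: "1 \<le> g x"
    and hd: "H_dec (g(x := g x - 1)) A Hs x Hs'"
  shows "invH A (g(x := g x - 1)) Hs' \<and> card Hs' \<le> card Hs + 1 \<and> card Hs \<le> card Hs' + 1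
     \<and> (\<forall>y\<in>Hs' - Hs. (g(x := g x - 1)) y \<le> card Hs' + 1)"
proof -
  let ?g = "g(x := g x - 1)"
  let ?h = "card Hs"
  have fin: "finite Hs" using I by (auto simp: invH_def intro: finite_subset)
  show ?thesis
  proof (cases "x \<notin> Hs \<or> ?h \<le> ?g x")
    case True
    then have "Hs' = Hs" using hd by (simp add: H_dec_def)
    then show ?thesis using I True by (auto simp: invH_def)
  next
    case False
    then have xn: "x \<in> Hs" and gx: "g x - 1 < ?h" by auto
    have "g x \<ge> ?h" using I xn by (auto simp: invH_def)
    then have gx1: "g x = ?h" using gx g1 by auto
    have hpos: "?h \<ge> 1" using gx1 g1 by simp
    show ?thesis
    proof (cases "\<exists>z\<in>A - Hs. ?g z = ?h")
      case True
      then obtain z where z: "z \<in> A - Hs" "?g z = ?h" and Hs': "Hs' = insert z (Hs - {x})"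
        using hd False by (auto simp: H_dec_def)
      have zx: "z \<noteq> x" using z xn by auto
      have "z \<notin> Hs - {x}" using z by simp
      then have "card Hs' = Suc (card (Hs - {x}))" using Hs' fin by simp
      also have "\<dots> = ?h" using fin xn by (rule card_Suc_Diff1)
      finally have c: "card Hs' = ?h" .
      show ?thesis using I c Hs' x gx1 z zx xn by (auto simp: invH_def)
    next
      case False2: False
      then have Hs': "Hs' = Hs - {x}" using hd False by (auto simp: H_dec_def)
      have c: "card Hs' = ?h - 1" using Hs' fin xn by simp
      have "\<forall>y\<in>A. ?h - 1 < ?g y \<longrightarrow> y \<in> Hs'"
      proof (intro ballI impI)
        fix y assume y: "y \<in> A" "?h - 1 < ?g y"
        then have yx: "y \<noteq> x" using gx1 by auto
        then have "?g y = g y" by simp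
        then have "g y \<ge> ?h" using y hpos by simp
        show "y \<in> Hs'"
        proof (cases "g y = ?h")
          case True
          show ?thesis
          proof (rule ccontr)
            assume "y \<notin> Hs'"
            then have "y \<in> A - Hs" using y yx Hs' by auto
            moreover have "?g y = ?h" using True yx by simp
            ultimately show False using False2 by blast
          qed
        next
          case False
          then have "?h < g y" using \<open>g y \<ge> ?h\<close> by simp
          then show ?thesis using I y yx Hs' by (auto simp: invH_def)
        qed
      qed
      then show ?thesis using I c Hs' x gx1 xn hpos by (auto simp: invH_def)
    qed
  qed
qed



definition cnt :: "'a hstate \<Rightarrow> nat \<Rightarrow> nat" where
  "cnt st v = card {x \<in> S st. v \<le> f st x}"

lemma card_insert_bound:
  assumes "finite A" "\<forall>y. y \<noteq> x \<longrightarrow> (Q y \<longleftrightarrow> R y)"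
  shows "card {y\<in>A. Q y} \<le> card {y\<in>A. R y} + 1"
proof -
  have "{y\<in>A. Q y} \<subseteq> insert x {y\<in>A. R y}" using assms(2) by auto
  then have "card {y\<in>A. Q y} \<le> card (insert x {y\<in>A. R y})"
    by (rule card_mono[rotated]) (use assms(1) in simp)
  also have "\<dots> \<le> card {y\<in>A. R y} + 1" using assms(1) by (simp add: card_insert_if)
  finally show ?thesis .
qed

lemma cnt_change_gen:
  fixes g g' :: "'a \<Rightarrow> nat"
  assumes fin: "finite A" and oth: "\<forall>y. y \<noteq> x \<longrightarrow> g' y = g y"
    and d1: "g' x \<le> g x + 1" and d2: "g x \<le> g' x + 1"
  shows "\<exists>w. \<forall>v. (v \<noteq> w \<longrightarrow> card {y\<in>A. v \<le> g' y} = card {y\<in>A. v \<le> g y})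
     \<and> card {y\<in>A. v \<le> g' y} \<le> card {y\<in>A. v \<le> g y} + 1
     \<and> card {y\<in>A. v \<le> g y} \<le> card {y\<in>A. v \<le> g' y} + 1"
proof (intro exI allI conjI impI)
  let ?w = "max (g x) (g' x)"
  fix v assume v: "v \<noteq> ?w"
  have "\<forall>y. (v \<le> g' y) = (v \<le> g y)"
  proof
    fix y show "(v \<le> g' y) = (v \<le> g y)"
    proof (cases "y = x")
      case True
      have "g' x = g x \<or> g' x = g x + 1 \<or> g x = g' x + 1" using d1 d2 by arith
      then show ?thesis using True v by (auto simp: max_def)
    qed (use oth in auto)
  qed
  then show "card {y\<in>A. v \<le> g' y} = card {y\<in>A. v \<le> g y}" by simp
next
  fix v
  show "card {y\<in>A. v \<le> g' y} \<le> card {y\<in>A. v \<le> g y} + 1"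
    by (rule card_insert_bound[OF fin, of x]) (use oth in auto)
  show "card {y\<in>A. v \<le> g y} \<le> card {y\<in>A. v \<le> g' y} + 1"
    by (rule card_insert_bound[OF fin, of x]) (use oth in auto)
qed

definition cnt_ok :: "'a hstate \<Rightarrow> 'a hstate \<Rightarrow> bool" where
  "cnt_ok st st' \<longleftrightarrow> (\<exists>w. \<forall>v. 1 \<le> v \<longrightarrow> (v \<noteq> w \<longrightarrow> cnt st' v = cnt st v)
     \<and> cnt st' v \<le> cnt st v + 1 \<and> cnt st v \<le> cnt st' v + 1)"

definition fchg :: "'a hstate \<Rightarrow> 'a hstate \<Rightarrow> bool" where
  "fchg st st' \<longleftrightarrow> (\<exists>w. (\<forall>y. y \<noteq> w \<longrightarrow> f st' y = f st y)
     \<and> f st' w \<le> f st w + 1 \<and> f st w \<le> f st' w + 1)"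

lemma step_facts:
  assumes I: "hinv st" and st: "step st op st'"
  shows "hinv st' \<and> card (H st') \<le> card (H st) + 1 \<and> card (H st) \<le> card (H st') + 1
    \<and> (\<forall>y\<in>H st' - H st. f st' y \<le> card (H st') + 1) \<and> fchg st st' \<and> cnt_ok st st'
    \<and> P st' = P_upd (f st') (H st') (P st)"
proof -
  have Pst: "P st' = P_upd (f st') (H st') (P st)" using st by (simp add: step_def)
  have IH: "invH (S st) (f st) (H st)" using I by (simp add: inv_iff)
  have Pprops: "P st' \<subseteq> H st' \<and> (\<forall>x\<in>H st' - P st'. f st' x < 2 * card (H st'))"
    using Pst P_upd_sub P_upd_low by metis
  have fin: "finite (S st)" using I by (simp add: hinv_def)
  have fz: "\<forall>x. x \<notin> S st \<longrightarrow> f st x = 0" using I by (simp add: hinv_def)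
  show ?thesis
  proof (cases op)
    case (Ins x)
    then have c: "x \<notin> S st" "S st' = insert x (S st)" "f st' = (f st)(x := 0)" "H st' = H st"
      using st by (auto simp: step_def)
    have HS: "H st \<subseteq> S st" using I by (simp add: hinv_def)
    have "invH (S st') (f st') (H st')" using IH c HS by (auto simp: invH_def)
    then have i: "hinv st'" using Pprops fz c by (auto simp: inv_iff)
    have fc: "fchg st st'" unfolding fchg_def
      by (rule exI[of _ x]) (use c I in \<open>auto simp: hinv_def\<close>)
    have "\<forall>v. 1 \<le> v \<longrightarrow> cnt st' v = cnt st v"
    proof (intro allI impI)
      fix v :: nat assume "1 \<le> v"
      then have "{y \<in> S st'. v \<le> f st' y} = {y \<in> S st. v \<le> f st y}" using c by auto
      then show "cnt st' v = cnt st v" by (simp add: cnt_def)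
    qed
    then have "cnt_ok st st'" unfolding cnt_ok_def by (intro exI[of _ 0]) auto
    then show ?thesis using i c fc Pst by auto
  next
    case (Del x)
    then have c: "x \<in> S st" "f st x = 0" "S st' = S st - {x}" "f st' = f st" "H st' = H st"
      using st by (auto simp: step_def)
    have HS: "H st \<subseteq> S st" and fH: "finite (H st)" using I fin by (auto simp: hinv_def intro: finite_subset)
    have "x \<notin> H st"
    proof
      assume xH: "x \<in> H st"
      then have "card (H st) \<le> 0" using I c by (auto simp: hinv_def)
      then show False using fH xH by auto
    qed
    then have "invH (S st') (f st') (H st')" using IH c HS by (auto simp: invH_def)
    then have i: "hinv st'" using Pprops fz c by (auto simp: inv_iff)
    have fc: "fchg st st'" unfolding fchg_def
      by (rule exI[of _ x]) (use c in auto)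
    have "\<forall>v. 1 \<le> v \<longrightarrow> cnt st' v = cnt st v"
    proof (intro allI impI)
      fix v :: nat assume "1 \<le> v"
      then have "{y \<in> S st'. v \<le> f st' y} = {y \<in> S st. v \<le> f st y}" using c by auto
      then show "cnt st' v = cnt st v" by (simp add: cnt_def)
    qed
    then have "cnt_ok st st'" unfolding cnt_ok_def by (intro exI[of _ 0]) auto
    then show ?thesis using i c fc Pst by auto
  next
    case (Inc x)
    then have c: "x \<in> S st" "S st' = S st" "f st' = (f st)(x := f st x + 1)"
       "H_inc (f st') (H st) x (H st')"
      using st by (auto simp: step_def)
    have r: "invH (S st) ((f st)(x := f st x + 1)) (H st') \<and> card (H st') \<le> card (H st) + 1
      \<and> card (H st) \<le> card (H st') + 1
      \<and> (\<forall>y\<in>H st' - H st. ((f st)(x := f st x + 1)) y \<le> card (H st') + 1)"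
      by (rule inc_facts[OF IH c(1)]) (use c in simp)
    then have i: "hinv st'" using Pprops fz c by (auto simp: inv_iff)
    have fc: "fchg st st'" unfolding fchg_def
      by (rule exI[of _ x]) (use c in auto)
    have "\<exists>w. \<forall>v. (v \<noteq> w \<longrightarrow> card {y\<in>S st. v \<le> f st' y} = card {y\<in>S st. v \<le> f st y})
      \<and> card {y\<in>S st. v \<le> f st' y} \<le> card {y\<in>S st. v \<le> f st y} + 1
      \<and> card {y\<in>S st. v \<le> f st y} \<le> card {y\<in>S st. v \<le> f st' y} + 1"
      by (rule cnt_change_gen[OF fin, of x]) (use c in auto)
    then obtain w where w: "\<forall>v. (v \<noteq> w \<longrightarrow> card {y\<in>S st. v \<le> f st' y} = card {y\<in>S st. v \<le> f st y})
      \<and> card {y\<in>S st. v \<le> f st' y} \<le> card {y\<in>S st. v \<le> f st y} + 1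
      \<and> card {y\<in>S st. v \<le> f st y} \<le> card {y\<in>S st. v \<le> f st' y} + 1" by blast
    have "cnt_ok st st'" unfolding cnt_ok_def cnt_def
      by (rule exI[of _ w]) (use w c in auto)
    then show ?thesis using i r c fc Pst by auto
  next
    case (Dec x)
    then have c: "x \<in> S st" "1 \<le> f st x" "S st' = S st" "f st' = (f st)(x := f st x - 1)"
       "H_dec (f st') (S st) (H st) x (H st')"
      using st by (auto simp: step_def)
    have r: "invH (S st) ((f st)(x := f st x - 1)) (H st') \<and> card (H st') \<le> card (H st) + 1
      \<and> card (H st) \<le> card (H st') + 1
      \<and> (\<forall>y\<in>H st' - H st. ((f st)(x := f st x - 1)) y \<le> card (H st') + 1)"
      by (rule dec_facts[OF IH c(1) c(2)]) (use c in simp)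
    then have i: "hinv st'" using Pprops fz c by (auto simp: inv_iff)
    have fc: "fchg st st'" unfolding fchg_def
      by (rule exI[of _ x]) (use c in auto)
    have "\<exists>w. \<forall>v. (v \<noteq> w \<longrightarrow> card {y\<in>S st. v \<le> f st' y} = card {y\<in>S st. v \<le> f st y})
      \<and> card {y\<in>S st. v \<le> f st' y} \<le> card {y\<in>S st. v \<le> f st y} + 1
      \<and> card {y\<in>S st. v \<le> f st y} \<le> card {y\<in>S st. v \<le> f st' y} + 1"
      by (rule cnt_change_gen[OF fin, of x]) (use c in auto)
    then obtain w where w: "\<forall>v. (v \<noteq> w \<longrightarrow> card {y\<in>S st. v \<le> f st' y} = card {y\<in>S st. v \<le> f st y})
      \<and> card {y\<in>S st. v \<le> f st' y} \<le> card {y\<in>S st. v \<le> f st y} + 1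
      \<and> card {y\<in>S st. v \<le> f st y} \<le> card {y\<in>S st. v \<le> f st' y} + 1" by blast
    have "cnt_ok st st'" unfolding cnt_ok_def cnt_def
      by (rule exI[of _ w]) (use w c in auto)
    then show ?thesis using i r c fc Pst by auto
  qed
qed



definition tau :: "nat \<Rightarrow> nat \<Rightarrow> int" where
  "tau v c = min (max 0 (2 * int c - int v)) (int v)"

definition NN :: "'a hstate \<Rightarrow> int" where
  "NN st = (\<Sum>v\<in>{1..2 * card (H st)}. tau v (cnt st v))"

lemma finH: "hinv st \<Longrightarrow> finite (H st)"
  by (auto simp: hinv_def intro: finite_subset)

lemma cnt_low: assumes I: "hinv st" and v: "v \<le> card (H st)" shows "card (H st) \<le> cnt st v"
proof -
  have "H st \<subseteq> {x \<in> S st. v \<le> f st x}" using I v by (force simp: hinv_def)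
  moreover have "finite (S st)" using I by (simp add: hinv_def)
  ultimately show ?thesis unfolding cnt_def by (intro card_mono) auto
qed

lemma cnt_high: assumes I: "hinv st" and v: "card (H st) < v" shows "cnt st v \<le> card (H st)"
proof -
  have "{x \<in> S st. v \<le> f st x} \<subseteq> H st" using I v by (force simp: hinv_def)
  then show ?thesis unfolding cnt_def using finH[OF I] by (intro card_mono) auto
qed

lemma tau_zero: "c \<le> h \<Longrightarrow> 2 * h < v \<Longrightarrow> tau v c = 0"
  by (simp add: tau_def)

lemma NN_ext:
  assumes I: "hinv st" and M: "2 * card (H st) \<le> M"
  shows "(\<Sum>v\<in>{1..M}. tau v (cnt st v)) = NN st"
proof -
  let ?h = "card (H st)"
  have U: "{1..M} = {1..2 * ?h} \<union> {2 * ?h + 1..M}" using M by auto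
  have "(\<Sum>v\<in>{2 * ?h + 1..M}. tau v (cnt st v)) = 0"
  proof (rule sum.neutral, rule ballI)
    fix v assume "v \<in> {2 * ?h + 1..M}"
    then have v: "2 * ?h < v" by auto
    then have "cnt st v \<le> ?h" using cnt_high[OF I] by simp
    then show "tau v (cnt st v) = 0" using tau_zero v by blast
  qed
  moreover have "(\<Sum>v\<in>{1..M}. tau v (cnt st v)) =
     (\<Sum>v\<in>{1..2 * ?h}. tau v (cnt st v)) + (\<Sum>v\<in>{2 * ?h + 1..M}. tau v (cnt st v))"
    unfolding U by (rule sum.union_disjoint) auto
  ultimately show ?thesis by (simp add: NN_def)
qed

lemma gauss_int: "2 * (\<Sum>v\<in>{1..h}. int v) = int h * (int h + 1)"
  by (induction h) (auto simp: algebra_simps)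

lemma NN_bounds:
  assumes I: "hinv st"
  shows "int (card (H st)) * (int (card (H st)) + 1) \<le> 2 * NN st
       \<and> NN st \<le> int (card (H st)) * int (card (H st))"
proof -
  let ?h = "card (H st)"
  have U: "{1..2 * ?h} = {1..?h} \<union> {?h + 1..?h + ?h}" by auto
  have split: "NN st = (\<Sum>v\<in>{1..?h}. tau v (cnt st v)) + (\<Sum>v\<in>{?h + 1..?h + ?h}. tau v (cnt st v))"
    unfolding NN_def U by (rule sum.union_disjoint) auto
  have A: "(\<Sum>v\<in>{1..?h}. tau v (cnt st v)) = (\<Sum>v\<in>{1..?h}. int v)"
  proof (rule sum.cong[OF refl])
    fix v assume "v \<in> {1..?h}"
    then have "v \<le> ?h" by simp
    then have "?h \<le> cnt st v" using cnt_low[OF I] by simp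
    then show "tau v (cnt st v) = int v" using \<open>v \<le> ?h\<close> by (simp add: tau_def)
  qed
  have B1: "0 \<le> (\<Sum>v\<in>{?h + 1..?h + ?h}. tau v (cnt st v))"
    by (rule sum_nonneg) (simp add: tau_def)
  have "(\<Sum>v\<in>{?h + 1..?h + ?h}. tau v (cnt st v)) \<le> (\<Sum>v\<in>{?h + 1..?h + ?h}. 2 * int ?h - int v)"
  proof (rule sum_mono)
    fix v assume "v \<in> {?h + 1..?h + ?h}"
    then have "?h < v" "v \<le> ?h + ?h" by simp_all
    then have "cnt st v \<le> ?h" using cnt_high[OF I] by simp
    then show "tau v (cnt st v) \<le> 2 * int ?h - int v" using \<open>v \<le> ?h + ?h\<close> by (simp add: tau_def)
  qed
  also have "\<dots> = (\<Sum>u\<in>{1..?h}. 2 * int ?h - int (u + ?h))"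
    using sum.shift_bounds_cl_nat_ivl[of "\<lambda>v. 2 * int ?h - int v" 1 ?h ?h] by (simp add: add.commute)
  also have "\<dots> = (\<Sum>u\<in>{1..?h}. int ?h - int u)" by simp
  also have "\<dots> = int ?h * int ?h - (\<Sum>u\<in>{1..?h}. int u)"
    by (simp add: sum_subtractf)
  finally have B2: "(\<Sum>v\<in>{?h + 1..?h + ?h}. tau v (cnt st v)) \<le> int ?h * int ?h - (\<Sum>u\<in>{1..?h}. int u)" .
  have G: "2 * (\<Sum>v\<in>{1..?h}. int v) = int ?h * (int ?h + 1)" by (rule gauss_int)
  show ?thesis using split A B1 B2 G by linarith
qed

lemma tau_lip: "c' \<le> c + 1 \<Longrightarrow> c \<le> c' + 1 \<Longrightarrow> \<bar>tau v c' - tau v c\<bar> \<le> 2"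
  by (simp add: tau_def)

lemma NN_step:
  assumes I: "hinv st" and st: "step st op st'"
  shows "\<bar>NN st' - NN st\<bar> \<le> 2"
proof -
  have F: "hinv st' \<and> card (H st') \<le> card (H st) + 1 \<and> card (H st) \<le> card (H st') + 1
    \<and> cnt_ok st st'" using step_facts[OF I st] by auto
  let ?M = "2 * card (H st) + 2"
  have e1: "NN st = (\<Sum>v\<in>{1..?M}. tau v (cnt st v))" using NN_ext[OF I, of ?M] by simp
  have e2: "NN st' = (\<Sum>v\<in>{1..?M}. tau v (cnt st' v))" using NN_ext[of st' ?M] F by simp
  obtain w where w: "\<forall>v. 1 \<le> v \<longrightarrow> (v \<noteq> w \<longrightarrow> cnt st' v = cnt st v)
     \<and> cnt st' v \<le> cnt st v + 1 \<and> cnt st v \<le> cnt st' v + 1"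
    using F by (auto simp: cnt_ok_def)
  have "NN st' - NN st = (\<Sum>v\<in>{1..?M}. tau v (cnt st' v) - tau v (cnt st v))"
    using e1 e2 by (simp add: sum_subtractf)
  also have "\<bar>\<dots>\<bar> \<le> (\<Sum>v\<in>{1..?M}. \<bar>tau v (cnt st' v) - tau v (cnt st v)\<bar>)"
    by (rule sum_abs)
  also have "\<dots> \<le> (\<Sum>v\<in>{1..?M}. if v = w then 2 else 0)"
  proof (rule sum_mono)
    fix v assume "v \<in> {1..?M}"
    then have v1: "1 \<le> v" by simp
    show "\<bar>tau v (cnt st' v) - tau v (cnt st v)\<bar> \<le> (if v = w then 2 else 0)"
      using w v1 tau_lip by (cases "v = w") auto
  qed
  also have "\<dots> \<le> 2" by (simp add: sum.delta)
  finally show ?thesis .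
qed



lemma max_lip: "\<bar>max 0 (p - 3) - max 0 (q - 3)\<bar> \<le> \<bar>p - q\<bar>" for p q :: real
  by (simp add: max_def abs_if)

lemma key_real:
  fixes a a' N N' h :: real
  assumes a0: "0 \<le> a" and a0': "0 \<le> a'" and ah: "a \<le> 2*h" and ah': "a' \<le> 2*h" and h0: "h > 0"
    and hN: "h*h \<le> 2*N" and N'0: "N' > 0" and dN: "\<bar>N - N'\<bar> \<le> 2" and da: "\<bar>a' - a\<bar> \<le> 1"
  shows "\<bar>a'^2/N' - a^2/N\<bar> \<le> \<bar>a'-a\<bar> * 4 * h / N' + 16/N'"
proof -
  have "h*h > 0" using h0 by simp
  then have N0: "N > 0" using hN by linarith
  have eq: "a'^2/N' - a^2/N = (a'^2 - a^2)/N' + a^2*(N - N')/(N*N')"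
    using N0 N'0 by (simp add: field_simps power2_eq_square)
  have t1: "\<bar>(a'^2 - a^2)/N'\<bar> \<le> \<bar>a'-a\<bar> * 4 * h / N'"
  proof -
    have "a'^2 - a^2 = (a'-a) * (a'+a)" by (simp add: power2_eq_square algebra_simps)
    then have "\<bar>a'^2 - a^2\<bar> = \<bar>a'-a\<bar> * (a'+a)" using a0 a0' by (simp add: abs_mult)
    also have "\<dots> \<le> \<bar>a'-a\<bar> * (4*h)" using ah ah' by (intro mult_left_mono) auto
    finally show ?thesis using N'0 by (simp add: divide_right_mono)
  qed
  have t2: "\<bar>a^2*(N - N')/(N*N')\<bar> \<le> 16/N'"
  proof -
    have "\<bar>a^2*(N - N')\<bar> = a^2 * \<bar>N - N'\<bar>" by (simp add: abs_mult)
    also have "\<dots> \<le> (4*h*h) * 2"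
    proof (rule mult_mono)
      have "a*a \<le> (2*h)*(2*h)" using a0 ah by (intro mult_mono) auto
      then show "a^2 \<le> 4*h*h" by (simp add: power2_eq_square)
    qed (use dN h0 in auto)
    also have "\<dots> \<le> 16 * N" using hN by simp
    finally have "\<bar>a^2*(N - N')\<bar> \<le> 16 * N" .
    then have "\<bar>a^2*(N - N')\<bar> / (N*N') \<le> 16 * N / (N*N')"
      by (rule divide_right_mono) (use N0 N'0 in simp)
    also have "\<dots> = 16/N'" using N0 by simp
    finally show ?thesis using N0 N'0 by (simp add: abs_div)
  qed
  have "\<bar>(a'^2 - a^2)/N' + a^2*(N - N')/(N*N')\<bar> \<le> \<bar>(a'^2 - a^2)/N'\<bar> + \<bar>a^2*(N - N')/(N*N')\<bar>"
    by (rule abs_triangle_ineq)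
  then show ?thesis unfolding eq using add_mono[OF t1 t2] by (rule order_trans)
qed



definition rho :: "'a hstate \<Rightarrow> 'a \<Rightarrow> real" where
  "rho st x = max 0 (real (f st x)^2 / real_of_int (NN st) - 3)"

definition Phi :: "'a hstate \<Rightarrow> real" where
  "Phi st = (\<Sum>x\<in>H st - P st. rho st x)"

lemma rho_nonneg: "0 \<le> rho st x" by (simp add: rho_def)

lemma Phi_nonneg: "0 \<le> Phi st" unfolding Phi_def by (rule sum_nonneg) (simp add: rho_nonneg)

lemma NN_real:
  assumes I: "hinv st"
  shows "real (card (H st)) * (real (card (H st)) + 1) \<le> 2 * real_of_int (NN st)
       \<and> real_of_int (NN st) \<le> real (card (H st)) * real (card (H st))"
proof -
  have "int (card (H st)) * (int (card (H st)) + 1) \<le> 2 * NN st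
       \<and> NN st \<le> int (card (H st)) * int (card (H st))" by (rule NN_bounds[OF I])
  then have a: "int (card (H st)) * (int (card (H st)) + 1) \<le> 2 * NN st"
    and b: "NN st \<le> int (card (H st)) * int (card (H st))" by auto
  have "real_of_int (int (card (H st)) * (int (card (H st)) + 1)) \<le> real_of_int (2 * NN st)"
    using a by (simp only: of_int_le_iff)
  moreover have "real_of_int (NN st) \<le> real_of_int (int (card (H st)) * int (card (H st)))"
    using b by (simp only: of_int_le_iff)
  ultimately show ?thesis by simp
qed

lemma rho_bound:
  assumes I: "hinv st" and x: "x \<in> H st - P st"
  shows "rho st x \<le> 5"
proof -
  let ?h = "real (card (H st))"
  let ?N = "real_of_int (NN st)"
  have fx: "f st x < 2 * card (H st)" using I x by (simp add: hinv_def)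
  have hpos: "card (H st) \<ge> 1" using fx by simp
  have NB: "?h * (?h + 1) \<le> 2 * ?N" using NN_real[OF I] by simp
  have "?h * (?h + 1) > 0" using hpos by simp
  then have N0: "?N > 0" using NB by linarith
  have "real (f st x) \<le> 2 * ?h" using fx by simp
  then have "real (f st x) * real (f st x) \<le> (2 * ?h) * (2 * ?h)" by (intro mult_mono) auto
  also have "\<dots> \<le> 8 * ?N" using NB by (simp add: algebra_simps)
  finally have "real (f st x)^2 \<le> 8 * ?N" by (simp add: power2_eq_square)
  then have "real (f st x)^2 / ?N \<le> 8" using N0 by (simp add: divide_le_eq)
  then show ?thesis by (simp add: rho_def)
qed



lemma step_large:
  assumes I: "hinv st" and st: "step st op st'" and big: "card (H st') \<ge> 4"
  shows "real (card (P st' - P st)) + Phi st' - Phi st \<le> 100 / real (card (H st'))"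
proof -
  have F: "hinv st' \<and> card (H st') \<le> card (H st) + 1 \<and> card (H st) \<le> card (H st') + 1
    \<and> (\<forall>y\<in>H st' - H st. f st' y \<le> card (H st') + 1) \<and> fchg st st' \<and> cnt_ok st st'
    \<and> P st' = P_upd (f st') (H st') (P st)" by (rule step_facts[OF I st])
  then have I': "hinv st'" and hh1: "card (H st') \<le> card (H st) + 1"
    and hh2: "card (H st) \<le> card (H st') + 1"
    and ent: "\<forall>y\<in>H st' - H st. f st' y \<le> card (H st') + 1" and fc: "fchg st st'"
    and Pst: "P st' = P_upd (f st') (H st') (P st)" by auto
  define h where "h = card (H st)"
  define h' where "h' = card (H st')"
  define N where "N = real_of_int (NN st)"
  define N' where "N' = real_of_int (NN st')"
  define A where "A = P st' - P st"
  define D where "D = (H st - P st) \<inter> H st'"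
  define B where "B = (H st - P st) \<inter> (H st' - P st')"
  define E where "E = H st' - H st"
  have finH': "finite (H st')" using finH[OF I'] .
  have finH0: "finite (H st)" using finH[OF I] .
  have h4: "h' \<ge> 4" using big by (simp add: h'_def)
  have h3: "h \<ge> 3" using hh1 h4 by (simp add: h_def h'_def)
  have NB: "real h * (real h + 1) \<le> 2 * N \<and> N \<le> real h * real h" using NN_real[OF I] by (simp add: h_def N_def)
  have NB': "real h' * (real h' + 1) \<le> 2 * N' \<and> N' \<le> real h' * real h'" using NN_real[OF I'] by (simp add: h'_def N'_def)
  have N'0: "N' > 0"
  proof -
    have "real h' * (real h' + 1) > 0" using h4 by simp
    then show ?thesis using NB' by linarith
  qed
  have hN: "real h * real h \<le> 2 * N" using NB by (simp add: algebra_simps)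
  have dN: "\<bar>N - N'\<bar> \<le> 2"
  proof -
    have "\<bar>NN st' - NN st\<bar> \<le> 2" by (rule NN_step[OF I st])
    then have "\<bar>real_of_int (NN st' - NN st)\<bar> \<le> 2"
      by (metis of_int_abs of_int_le_iff of_int_numeral)
    then show ?thesis by (simp add: N_def N'_def)
  qed
  have rho'_def: "\<And>x. rho st' x = max 0 (real (f st' x)^2 / N' - 3)" by (simp add: rho_def N'_def)
  have rho_def0: "\<And>x. rho st x = max 0 (real (f st x)^2 / N - 3)" by (simp add: rho_def N_def)
  have Pupd: "P st' = (P st \<inter> H st') \<union> {x \<in> H st' - (P st \<inter> H st'). 2 * h' \<le> f st' x}"
    using Pst by (simp add: P_upd_def h'_def)
  have Ebound: "\<And>x. x \<in> E \<Longrightarrow> f st' x \<le> h' + 1" using ent by (simp add: E_def h'_def)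
  have A_props: "\<And>x. x \<in> A \<Longrightarrow> x \<in> D \<and> 2 * h' \<le> f st' x"
  proof -
    fix x assume "x \<in> A"
    then have x: "x \<in> P st'" "x \<notin> P st" by (auto simp: A_def)
    then have xH': "x \<in> H st'" and fx: "2 * h' \<le> f st' x" using Pupd by auto
    have "x \<in> H st"
    proof (rule ccontr)
      assume "x \<notin> H st"
      then have "x \<in> E" using xH' by (simp add: E_def)
      then have "f st' x \<le> h' + 1" by (rule Ebound)
      then show False using fx h4 by simp
    qed
    then show "x \<in> D \<and> 2 * h' \<le> f st' x" using x xH' fx by (simp add: D_def)
  qed
  have AD: "A \<subseteq> D" using A_props by auto
  have BD: "B \<subseteq> D" by (auto simp: B_def D_def)
  have AB: "A \<inter> B = {}" by (auto simp: A_def B_def)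
  have finD: "finite D" using finH0 by (simp add: D_def)
  have finA: "finite A" using AD finD finite_subset by blast
  have finB: "finite B" using BD finD finite_subset by blast
  have HPB: "(H st' - P st') - B \<subseteq> E"
    using Pupd by (auto simp: B_def E_def)
  have BHP: "B \<subseteq> H st' - P st'" by (auto simp: B_def)
  have rhoE: "\<And>x. x \<in> E \<Longrightarrow> rho st' x = 0"
  proof -
    fix x assume "x \<in> E"
    then have "f st' x \<le> h' + 1" by (rule Ebound)
    then have "real (f st' x) \<le> real (h' + 1)" by (simp only: of_nat_le_iff)
    then have fx: "real (f st' x) \<le> real h' + 1" by simp
    have "real (f st' x) * real (f st' x) \<le> (real h' + 1) * (real h' + 1)"
      using fx by (intro mult_mono) auto
    also have "\<dots> \<le> (3/2 * real h') * (real h' + 1)"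
      by (rule mult_right_mono) (use h4 in auto)
    also have "\<dots> \<le> 3 * N'" using NB' by (simp add: algebra_simps)
    finally have "real (f st' x)^2 / N' \<le> 3" using N'0 by (simp add: power2_eq_square divide_le_eq)
    then show "rho st' x = 0" by (simp add: rho'_def)
  qed
  have rhoA: "\<And>x. x \<in> A \<Longrightarrow> 1 \<le> rho st' x"
  proof -
    fix x assume "x \<in> A"
    then have "2 * h' \<le> f st' x" using A_props by blast
    then have "real (2 * h') \<le> real (f st' x)" by (simp only: of_nat_le_iff)
    then have fx: "2 * real h' \<le> real (f st' x)" by simp
    have "(2 * real h') * (2 * real h') \<le> real (f st' x) * real (f st' x)"
      using fx by (intro mult_mono) auto
    moreover have "4 * N' \<le> (2 * real h') * (2 * real h')" using NB' by simp
    ultimately have "4 * N' \<le> real (f st' x)^2" by (simp add: power2_eq_square)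
    then have "4 \<le> real (f st' x)^2 / N'" using N'0 by (simp add: le_divide_eq)
    then show "1 \<le> rho st' x" by (simp add: rho'_def)
  qed
  have Phi'_eq: "Phi st' = (\<Sum>x\<in>B. rho st' x)"
  proof -
    have "Phi st' = (\<Sum>x\<in>(H st' - P st') - B. rho st' x) + (\<Sum>x\<in>B. rho st' x)"
      unfolding Phi_def by (rule sum.subset_diff[OF BHP]) (use finH' in simp)
    moreover have "(\<Sum>x\<in>(H st' - P st') - B. rho st' x) = 0"
      using HPB rhoE by (intro sum.neutral) blast
    ultimately show ?thesis by simp
  qed
  have Phi_ge: "(\<Sum>x\<in>A. rho st x) + (\<Sum>x\<in>B. rho st x) \<le> Phi st"
  proof -
    have "(\<Sum>x\<in>A. rho st x) + (\<Sum>x\<in>B. rho st x) = (\<Sum>x\<in>A \<union> B. rho st x)"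
      using finA finB AB by (simp add: sum.union_disjoint)
    also have "\<dots> \<le> Phi st" unfolding Phi_def
      by (rule sum_mono2) (use finH0 AD BD rho_nonneg in \<open>auto simp: D_def\<close>)
    finally show ?thesis .
  qed
  have cardA: "real (card A) \<le> (\<Sum>x\<in>A. rho st' x)"
  proof -
    have "real (card A) = (\<Sum>x\<in>A. 1)" by simp
    also have "\<dots> \<le> (\<Sum>x\<in>A. rho st' x)" by (rule sum_mono) (use rhoA in auto)
    finally show ?thesis .
  qed
  obtain w where w: "\<forall>y. y \<noteq> w \<longrightarrow> f st' y = f st y" "f st' w \<le> f st w + 1" "f st w \<le> f st' w + 1"
    using fc by (auto simp: fchg_def)
  have dfa: "\<And>y. \<bar>real (f st' y) - real (f st y)\<bar> \<le> (if y = w then 1 else 0)"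
    using w by (auto simp: abs_if)
  have elem: "\<And>x. x \<in> D \<Longrightarrow> \<bar>rho st' x - rho st x\<bar> \<le> (if x = w then 1 else 0) * (4 * real h / N') + 16 / N'"
  proof -
    fix x assume xD: "x \<in> D"
    then have "f st x < 2 * h" using I by (auto simp: D_def hinv_def h_def)
    then have n1: "f st x \<le> 2 * h" by simp
    have n2: "f st' x \<le> 2 * h"
    proof (cases "x = w")
      case True
      then show ?thesis using w(2) \<open>f st x < 2 * h\<close> by simp
    next
      case False
      then show ?thesis using w(1) n1 by simp
    qed
    have "real (f st x) \<le> real (2 * h)" "real (f st' x) \<le> real (2 * h)"
      using n1 n2 by (simp_all only: of_nat_le_iff)
    then have a: "real (f st x) \<le> 2 * real h" and a': "real (f st' x) \<le> 2 * real h" by simp_all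
    have k: "\<bar>real (f st' x)^2/N' - real (f st x)^2/N\<bar>
       \<le> \<bar>real (f st' x) - real (f st x)\<bar> * 4 * real h / N' + 16/N'"
      by (rule key_real[OF _ _ a a' _ hN N'0 dN]) (use h3 dfa[of x] in \<open>auto split: if_splits\<close>)
    have "\<bar>rho st' x - rho st x\<bar> \<le> \<bar>real (f st' x)^2/N' - real (f st x)^2/N\<bar>"
      unfolding rho'_def rho_def0 by (rule max_lip)
    also have "\<dots> \<le> \<bar>real (f st' x) - real (f st x)\<bar> * 4 * real h / N' + 16/N'" by (rule k)
    also have "\<bar>real (f st' x) - real (f st x)\<bar> * 4 * real h / N' \<le> (if x = w then 1 else 0) * (4 * real h / N')"
      using dfa[of x] N'0 h3 by (auto simp: field_simps)
    finally show "\<bar>rho st' x - rho st x\<bar> \<le> (if x = w then 1 else 0) * (4 * real h / N') + 16 / N'"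
      by simp
  qed
  have "real (card (P st' - P st)) + Phi st' - Phi st
      \<le> ((\<Sum>x\<in>A. rho st' x) - (\<Sum>x\<in>A. rho st x)) + ((\<Sum>x\<in>B. rho st' x) - (\<Sum>x\<in>B. rho st x))"
    using cardA Phi_ge Phi'_eq by (simp add: A_def)
  also have "\<dots> = (\<Sum>x\<in>A \<union> B. rho st' x - rho st x)"
    using finA finB AB by (simp add: sum.union_disjoint sum_subtractf)
  also have "\<dots> \<le> (\<Sum>x\<in>A \<union> B. \<bar>rho st' x - rho st x\<bar>)" by (rule sum_mono) simp
  also have "\<dots> \<le> (\<Sum>x\<in>D. \<bar>rho st' x - rho st x\<bar>)"
    by (rule sum_mono2) (use finD AD BD in auto)
  also have "\<dots> \<le> (\<Sum>x\<in>D. (if x = w then 1 else 0) * (4 * real h / N') + 16 / N')"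
    by (rule sum_mono) (rule elem)
  also have "\<dots> = (\<Sum>x\<in>D. (if x = w then 1 else 0) * (4 * real h / N')) + real (card D) * (16 / N')"
    by (simp add: sum.distrib)
  also have "\<dots> \<le> 4 * real h / N' + real h * (16 / N')"
  proof (rule add_mono)
    have "(\<Sum>x\<in>D. (if x = w then 1 else 0) * (4 * real h / N')) = (if w \<in> D then 4 * real h / N' else 0)"
    proof -
      have "(\<Sum>x\<in>D. (if x = w then 1 else 0) * (4 * real h / N')) = (\<Sum>x\<in>D. (if x = w then 1 else 0)) * (4 * real h / N')"
        by (rule sum_distrib_right[symmetric])
      also have "(\<Sum>x\<in>D. (if x = w then 1 else (0::real))) = (if w \<in> D then 1 else 0)"
        using finD by (simp add: sum.delta)
      finally show ?thesis by simp
    qed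
    also have "\<dots> \<le> 4 * real h / N'" using N'0 by simp
    finally show "(\<Sum>x\<in>D. (if x = w then 1 else 0) * (4 * real h / N')) \<le> 4 * real h / N'" .
    have "card D \<le> h" unfolding D_def h_def using finH0 by (intro card_mono) auto
    then show "real (card D) * (16 / N') \<le> real h * (16 / N')"
      using N'0 by (intro mult_right_mono) auto
  qed
  also have "\<dots> = 20 * real h / N'" by (simp add: field_simps)
  also have "\<dots> \<le> 100 / real h'"
  proof -
    have hh: "real h \<le> real h' + 1" using hh2 by (simp add: h_def h'_def)
    have "20 * real h * real h' \<le> 20 * (real h' + 1) * real h'"
      using hh by (intro mult_right_mono mult_left_mono) auto
    also have "\<dots> \<le> 100 * N'" using NB' by (simp add: algebra_simps)
    finally have "20 * real h * real h' \<le> 100 * N'" .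
    then show ?thesis using N'0 h4 by (simp add: field_simps)
  qed
  finally show ?thesis by (simp add: h'_def)
qed



lemma step_bound:
  assumes I: "hinv st" and st: "step st op st'"
  shows "real (card (P st' - P st)) + Phi st' - Phi st
     \<le> 100 * (if card (H st') = 0 then 0 else 1 / real (card (H st')))"
proof -
  have I': "hinv st'" using step_facts[OF I st] by auto
  have finH': "finite (H st')" using finH[OF I'] .
  have PH': "P st' \<subseteq> H st'" using I' by (simp add: hinv_def)
  have P0: "0 \<le> Phi st" by (rule Phi_nonneg)
  consider "card (H st') = 0" | "card (H st') \<ge> 1 \<and> card (H st') \<le> 3" | "card (H st') \<ge> 4" by linarith
  then show ?thesis
  proof cases
    case 1
    then have H0: "H st' = {}" using finH' by simp
    then have "P st' = {}" using PH' by auto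
    then have "card (P st' - P st) = 0" "Phi st' = 0" using H0 by (auto simp: Phi_def)
    then show ?thesis using P0 1 by simp
  next
    case 2
    have "card (P st' - P st) \<le> card (H st')"
      using PH' finH' by (intro card_mono) auto
    then have c1: "real (card (P st' - P st)) \<le> 3" using 2 by linarith
    have "Phi st' \<le> real (card (H st' - P st')) * 5"
      unfolding Phi_def by (rule sum_bounded_above) (rule rho_bound[OF I'])
    moreover have "card (H st' - P st') \<le> card (H st')" using finH' by (intro card_mono) auto
    ultimately have "Phi st' \<le> 15" using 2 by linarith
    moreover have "100 * (1 / real (card (H st'))) \<ge> 100 / 3"
      using 2 by (simp add: field_simps)
    ultimately show ?thesis using c1 P0 2 by auto
  next
    case 3
    then show ?thesis using step_large[OF I st] by simp
  qed
qed

lemma hindex_eq: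
  assumes I: "hinv st"
  shows "hindex (S st) (f st) = card (H st)"
  unfolding hindex_def
proof (rule Greatest_equality)
  show "\<exists>T\<subseteq>S st. card T = card (H st) \<and> (\<forall>x\<in>T. card (H st) \<le> f st x)"
    using I by (auto simp: hinv_def)
next
  fix y assume "\<exists>T\<subseteq>S st. card T = y \<and> (\<forall>x\<in>T. y \<le> f st x)"
  then obtain T where T: "T \<subseteq> S st" "card T = y" "\<forall>x\<in>T. y \<le> f st x" by blast
  show "y \<le> card (H st)"
  proof (rule ccontr)
    assume "\<not> y \<le> card (H st)"
    then have gt: "card (H st) < y" by simp
    have "T \<subseteq> H st" using T gt I by (force simp: hinv_def)
    then have "card T \<le> card (H st)" using finH[OF I] by (intro card_mono)
    then show False using T gt by simp
  qed
qed

lemma run_inv: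
  assumes R: "run ops sts"
  shows "\<forall>t \<le> length ops. hinv (sts ! t)"
proof -
  have "hinv (sts ! t)" if "t \<le> length ops" for t
    using that
  proof (induction t)
    case 0
    then show ?case using R inv_init by (simp add: run_def)
  next
    case (Suc t)
    then have "hinv (sts ! t)" "step (sts ! t) (ops ! t) (sts ! Suc t)" using R by (auto simp: run_def)
    then show ?case using step_facts by blast
  qed
  then show ?thesis by blast
qed

lemma card_diff_bal:
  assumes "finite A" "finite B"
  shows "card B + card (A - B) = card A + card (B - A)"
proof -
  have "A = (A \<inter> B) \<union> (A - B)" by auto
  then have a: "card A = card (A \<inter> B) + card (A - B)"
    using assms by (metis card_Un_disjoint finite_Diff finite_Int Diff_disjoint Int_Diff_disjoint)
  have "B = (A \<inter> B) \<union> (B - A)" by auto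
  then have b: "card B = card (A \<inter> B) + card (B - A)"
    using assms by (metis card_Un_disjoint finite_Diff finite_Int Int_Diff_disjoint inf_commute)
  show ?thesis using a b by simp
qed

theorem main_bound:
  fixes ops :: "'a oper list"
  assumes R: "run ops sts"
  shows "real (P_changes sts) \<le> 200 * qsum sts"
proof -
  let ?n = "length ops"
  have len: "length sts = Suc ?n" using R by (simp add: run_def)
  have IV: "\<forall>t \<le> ?n. hinv (sts ! t)" by (rule run_inv[OF R])
  have ST: "\<forall>t < ?n. step (sts ! t) (ops ! t) (sts ! Suc t)" using R by (simp add: run_def)
  define a where "a t = card (P (sts ! Suc t) - P (sts ! t))" for t
  define r where "r t = card (P (sts ! t) - P (sts ! Suc t))" for t
  define b where "b t = (if card (H (sts ! Suc t)) = 0 then 0 else 1 / real (card (H (sts ! Suc t))))" for t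
  define ph where "ph t = Phi (sts ! t)" for t
  have stepb: "\<And>t. t < ?n \<Longrightarrow> real (a t) + (ph (Suc t) - ph t) \<le> 100 * b t"
  proof -
    fix t assume t: "t < ?n"
    have "real (card (P (sts ! Suc t) - P (sts ! t))) + Phi (sts ! Suc t) - Phi (sts ! t)
       \<le> 100 * (if card (H (sts ! Suc t)) = 0 then 0 else 1 / real (card (H (sts ! Suc t))))"
      by (rule step_bound) (use IV ST t in auto)
    then show "real (a t) + (ph (Suc t) - ph t) \<le> 100 * b t" by (simp add: a_def b_def ph_def)
  qed
  have "(\<Sum>t<?n. real (a t) + (ph (Suc t) - ph t)) \<le> (\<Sum>t<?n. 100 * b t)"
    by (rule sum_mono) (use stepb in auto)
  then have "(\<Sum>t<?n. real (a t)) + (ph ?n - ph 0) \<le> 100 * (\<Sum>t<?n. b t)"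
    by (simp add: sum.distrib sum_lessThan_telescope sum_distrib_left)
  moreover have "ph 0 = 0" using R by (simp add: ph_def run_def Phi_def init_state_def)
  moreover have "ph ?n \<ge> 0" by (simp add: ph_def Phi_nonneg)
  ultimately have SA: "(\<Sum>t<?n. real (a t)) \<le> 100 * (\<Sum>t<?n. b t)" by linarith
  have finP: "\<And>t. t \<le> ?n \<Longrightarrow> finite (P (sts ! t))"
    using IV finH by (meson hinv_def finite_subset)
  have bal: "\<And>k. k \<le> ?n \<Longrightarrow> card (P (sts ! k)) + (\<Sum>t<k. r t) = (\<Sum>t<k. a t)"
  proof -
    fix k assume "k \<le> ?n"
    then show "card (P (sts ! k)) + (\<Sum>t<k. r t) = (\<Sum>t<k. a t)"
    proof (induction k)
      case 0
      then show ?case using R by (simp add: run_def init_state_def)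
    next
      case (Suc k)
      then have IHk: "card (P (sts ! k)) + (\<Sum>t<k. r t) = (\<Sum>t<k. a t)" by simp
      have "card (P (sts ! Suc k)) + r k = card (P (sts ! k)) + a k"
        unfolding a_def r_def by (rule card_diff_bal) (use finP Suc.prems in auto)
      then show ?case using IHk by simp
    qed
  qed
  have "(\<Sum>t<?n. r t) \<le> (\<Sum>t<?n. a t)" using bal[of ?n] by simp
  then have RA: "(\<Sum>t<?n. real (r t)) \<le> (\<Sum>t<?n. real (a t))"
    by (metis of_nat_le_iff of_nat_sum)
  have PC: "P_changes sts = (\<Sum>t<?n. a t + r t)"
    by (simp add: P_changes_def len a_def r_def)
  have "real (P_changes sts) = (\<Sum>t<?n. real (a t)) + (\<Sum>t<?n. real (r t))"
    unfolding PC by (simp add: sum.distrib)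
  also have "\<dots> \<le> 200 * (\<Sum>t<?n. b t)" using SA RA by linarith
  also have "(\<Sum>t<?n. b t) = qsum sts"
  proof -
    define hh where "hh t = hindex (S (sts ! t)) (f (sts ! t))" for t
    have "(\<Sum>t<?n. b t) = (\<Sum>t\<in>{Suc 0..?n}. if card (H (sts ! t)) = 0 then 0 else 1 / real (card (H (sts ! t))))"
      by (simp add: b_def sum.atLeast1_atMost_eq)
    also have "\<dots> = (\<Sum>t\<in>{Suc 0..?n}. if 1 \<le> hh t then 1 / real (hh t) else 0)"
    proof (rule sum.cong[OF refl])
      fix t assume "t \<in> {Suc 0..?n}"
      then have "hinv (sts ! t)" using IV by simp
      then have "hh t = card (H (sts ! t))" using hindex_eq by (simp add: hh_def)
      then show "(if card (H (sts ! t)) = 0 then 0 else 1 / real (card (H (sts ! t)))) =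
          (if 1 \<le> hh t then 1 / real (hh t) else 0)" by simp
    qed
    also have "\<dots> = (\<Sum>t\<in>{t\<in>{Suc 0..?n}. 1 \<le> hh t}. 1 / real (hh t))"
      by (rule sum.inter_filter[symmetric]) simp
    also have "{t\<in>{Suc 0..?n}. 1 \<le> hh t} = {t. 1 \<le> t \<and> t < length sts \<and> 1 \<le> hh t}"
      using len by auto
    finally show ?thesis by (simp add: qsum_def hh_def)
  qed
  finally show ?thesis .
qed

theorem theorem2:
  "\<exists>C :: real. \<forall>(ops :: nat oper list) sts. run ops sts \<longrightarrow> real (P_changes sts) \<le> C * qsum sts"
  using main_bound by blast


end
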